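(* For every integer $k$ and every integer $n\geq 1$, \[ b_{n}^{(k)}(x+1)-b_{n}^{(k)}(x)=\sum_{p=1}^{n}\sum_{m=1}^{p}\binom{n}{p}\frac{(-1)^{m+p}\,m!}{m^{k}}S_{2}(p,m)\,b_{n-p}(x). \]
   Context: For $k\in\mathbb{Z}$, the polylogarithm is $Li_k(x)=\sum_{n=1}^{\infty}\frac{x^n}{n^k}$. The poly-Bernoulli polynomials of the second kind $b_n^{(k)}(x)$ are defined by the generating function \[ \frac{Li_{k}(1-e^{-t})}{\log(1+t)}(1+t)^{x}=\sum_{n=0}^{\infty}b_{n}^{(k)}(x)\frac{t^{n}}{n!}. \] The Bernoulli polynomials of the second kind $b_n(x)$ are defined by $\frac{t}{\log(1+t)}(1+t)^x=\sum_{n=0}^{\infty}b_n(x)\frac{t^n}{n!}$. $S_2(n,l)$ denotes the Stirling numbers of the second kind, defined by $x^n=\sum_{l=0}^{n}S_2(n,l)(x)_l$, where $(x)_l=x(x-1)\cdots(x-l+1)$. *)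

theory Defs
  imports "HOL-Computational_Algebra.Formal_Power_Series" "HOL-Combinatorics.Stirling"
begin

text \<open>Formal power series Li_k(1 - e^{-t}) = sum_{j>=1} (1 - e^{-t})^j / j^k.
  Since (1 - e^{-t})^j has order j, the coefficient of t^m only involves j <= m.\<close>
definition polylog_fps :: "int \<Rightarrow> real fps" where
  "polylog_fps k = Abs_fps (\<lambda>m. \<Sum>j=1..m. fps_nth ((1 - fps_exp (-1)) ^ j) m / (real j powi k))"

text \<open>log(1+t) is fps_ln 1; (1+t)^x is fps_binomial x.\<close>
definition poly_bernoulli2 :: "int \<Rightarrow> nat \<Rightarrow> real \<Rightarrow> real" where
  "poly_bernoulli2 k n x =
     fact n * fps_nth (polylog_fps k * fps_binomial x / fps_ln 1) n"

definition bernoulli2 :: "nat \<Rightarrow> real \<Rightarrow> real" where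
  "bernoulli2 n x = fact n * fps_nth (fps_X * fps_binomial x / fps_ln 1) n"

end

theory Submission
  imports Defs
begin

lemma F_nth:
  "fps_nth ((1 - fps_exp (-1::real)) ^ m) p = (-1) ^ (m + p) * fact m * real (Stirling p m) / fact p"
proof (induction p arbitrary: m)
  case 0
  then show ?case by (cases m) auto
next
  case (Suc p)
  show ?case
  proof (cases m)
    case 0
    then show ?thesis by simp
  next
    case (Suc m')
    define F where "F = (\<lambda>j. (1 - fps_exp (-1::real)) ^ j)"
    have d: "fps_deriv (F (Suc m')) = fps_const (of_nat (Suc m')) * (F m' - F (Suc m'))"
    proof -
      have "fps_deriv (F (Suc m')) = fps_const (of_nat (Suc m')) * fps_deriv (1 - fps_exp (-1::real)) * F m'"
        unfolding F_def by (subst fps_deriv_power) simp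
      also have "fps_deriv (1 - fps_exp (-1::real)) = 1 - F 1"
        unfolding F_def by (simp add: fps_const_neg[symmetric] del: fps_const_neg)
      also have "fps_const (of_nat (Suc m')) * (1 - F 1) * F m' = fps_const (of_nat (Suc m')) * (F m' - F (Suc m'))"
        unfolding F_def by (simp add: algebra_simps)
      finally show ?thesis .
    qed
    have "fps_nth (fps_deriv (F (Suc m'))) p = of_nat (Suc m') * (fps_nth (F m') p - fps_nth (F (Suc m')) p)"
      by (subst d) (simp del: fps_deriv_nth)
    hence e: "real (Suc p) * fps_nth (F (Suc m')) (Suc p) = real (Suc m') * (fps_nth (F m') p - fps_nth (F (Suc m')) p)"
      by simp
    have IH1: "fps_nth (F m') p = (-1) ^ (m' + p) * fact m' * real (Stirling p m') / fact p"
      using Suc.IH unfolding F_def by blast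
    have IH2: "fps_nth (F (Suc m')) p = (-1) ^ (Suc m' + p) * fact (Suc m') * real (Stirling p (Suc m')) / fact p"
      using Suc.IH unfolding F_def by blast
    have "fps_nth (F (Suc m')) (Suc p) = real (Suc m') * (fps_nth (F m') p - fps_nth (F (Suc m')) p) / real (Suc p)"
      using e by (simp add: field_simps del: of_nat_Suc)
    also have "\<dots> = (-1) ^ (Suc m' + Suc p) * fact (Suc m') *
        real (Stirling (Suc p) (Suc m')) / fact (Suc p)"
      unfolding IH1 IH2
      by (simp add: field_simps del: of_nat_Suc) (simp add: algebra_simps)
    finally show ?thesis using Suc unfolding F_def by simp
  qed
qed

lemma P_nth:
  "fps_nth (polylog_fps k) p = (\<Sum>m=1..p. (-1) ^ (m + p) * fact m / (real m powi k)
        * real (Stirling p m) / fact p)"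
  unfolding polylog_fps_def by (simp add: F_nth mult.commute)

lemma ln_sub: "subdegree (fps_ln (1::real)) = 1"
  by (rule subdegreeI) (auto simp: fps_ln_def)

lemma key: "polylog_fps k * fps_binomial (x + 1) / fps_ln 1 - polylog_fps k * fps_binomial x / fps_ln 1
   = polylog_fps k * (fps_X * fps_binomial x / fps_ln 1)"
proof -
  have "polylog_fps k * fps_binomial (x + 1) / fps_ln 1 - polylog_fps k * fps_binomial x / fps_ln 1
     = (polylog_fps k * (fps_X * fps_binomial x)) / fps_ln 1"
    by (simp add: fps_divide_diff[symmetric] fps_binomial_add_mult fps_binomial_1 algebra_simps)
  also have "\<dots> = polylog_fps k * (fps_X * fps_binomial x / fps_ln 1)"
  proof (rule fps_divide_times)
    have "fps_nth (fps_binomial x) 0 \<noteq> 0" by simp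
    hence "subdegree (fps_X * fps_binomial x) = 1"
      by (subst subdegree_mult) (auto simp: subdegree_eq_0_iff dest: arg_cong[where f="\<lambda>f. fps_nth f 0"])
    thus "subdegree (fps_ln (1::real)) \<le> subdegree (fps_X * fps_binomial (x::real))" using ln_sub by simp
  qed
  finally show ?thesis .
qed

theorem theorem3:
  fixes k :: int and n :: nat and x :: real
  assumes "n \<ge> 1"
  shows "poly_bernoulli2 k n (x + 1) - poly_bernoulli2 k n x =
    (\<Sum>p=1..n. \<Sum>m=1..p. real (n choose p) * (-1) ^ (m + p) * fact m / (real m powi k)
        * real (Stirling p m) * bernoulli2 (n - p) x)"
proof -
  define G where "G = fps_X * fps_binomial x / fps_ln 1"
  have G: "fps_nth G j = bernoulli2 j x / fact j" for j
    unfolding G_def bernoulli2_def by simp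
  have "poly_bernoulli2 k n (x + 1) - poly_bernoulli2 k n x = fact n * fps_nth (polylog_fps k * G) n"
    unfolding poly_bernoulli2_def G_def key[symmetric] by (simp add: algebra_simps)
  also have "\<dots> = fact n * (\<Sum>p=0..n. fps_nth (polylog_fps k) p * fps_nth G (n - p))"
    by (simp add: fps_mult_nth)
  also have "\<dots> = fact n * (\<Sum>p=1..n. fps_nth (polylog_fps k) p * fps_nth G (n - p))"
    by (simp add: sum.atLeast_Suc_atMost P_nth)
  also have "\<dots> = (\<Sum>p=1..n. \<Sum>m=1..p. real (n choose p) * (-1) ^ (m + p) * fact m / (real m powi k)
        * real (Stirling p m) * bernoulli2 (n - p) x)"
    unfolding sum_distrib_left
  proof (rule sum.cong[OF refl])
    fix p assume p: "p \<in> {1..n}"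
    have c: "real (n choose p) = fact n / (fact p * fact (n - p))"
      using p by (simp add: binomial_fact)
    show "fact n * (fps_nth (polylog_fps k) p * fps_nth G (n - p)) = (\<Sum>m=1..p. real (n choose p) * (-1) ^ (m + p) * fact m / (real m powi k)
        * real (Stirling p m) * bernoulli2 (n - p) x)"
      unfolding P_nth G c sum_distrib_right sum_distrib_left
      by (rule sum.cong[OF refl]) (simp add: field_simps)
  qed
  finally show ?thesis .
qed

end
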